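(* There is a subset $A$ of the unit circle $S^1\subseteq\mathbb{R}^2$ such that for every line $l\subseteq\mathbb{R}^2$ and the orthogonal projection $\pi:\mathbb{R}^2\to l$, the set $\pi[A]$ is a Bernstein set in $\pi[S^1]$.
   Context: A subset $S$ of a Polish space $Y$ is a Bernstein set in $Y$ if for every nonempty perfect set $P\subseteq Y$ we have $S\cap P\neq\emptyset$ and $(Y\setminus S)\cap P\neq\emptyset$. *)

theory Defs
  imports "HOL-Analysis.Analysis"
begin

definition perfect_in :: "'a::metric_space set \<Rightarrow> 'a set \<Rightarrow> bool" where
  "perfect_in Y P \<longleftrightarrow> closedin (top_of_set Y) P \<and> (\<forall>x\<in>P. x islimpt P)"

definition bernstein_in :: "'a::metric_space set \<Rightarrow> 'a set \<Rightarrow> bool" where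
  "bernstein_in S Y \<longleftrightarrow> S \<subseteq> Y \<and>
     (\<forall>P. perfect_in Y P \<and> P \<noteq> {} \<longrightarrow> S \<inter> P \<noteq> {} \<and> (Y - S) \<inter> P \<noteq> {})"

definition line_through :: "real^2 \<Rightarrow> real^2 \<Rightarrow> (real^2) set" where
  "line_through a d = {a + t *\<^sub>R d | t. True}"

definition orth_proj_line :: "real^2 \<Rightarrow> real^2 \<Rightarrow> real^2 \<Rightarrow> real^2" where
  "orth_proj_line a d x = a + (((x - a) \<bullet> d) / (d \<bullet> d)) *\<^sub>R d"

end

theory Submission
  imports Defs
begin
unbundle cardinal_syntax
no_notation Set_Algebras.elt_set_eq (infix "=o" 50)

lemma perfect_card_nat:
  fixes Q :: "'a::complete_space set"
  assumes clQ: "closed Q" and neQ: "Q \<noteq> {}" and lim: "\<forall>x\<in>Q. x islimpt Q"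
  shows "|UNIV::nat set set| \<le>o |Q|"
proof -
  obtain p0 where p0: "p0 \<in> Q" using neQ by blast
  define nx where "nx p r = (SOME b. b\<in>Q \<and> b\<noteq>p \<and> dist b p < r/2)" for p and r :: real
  have nx: "nx p r \<in> Q \<and> nx p r \<noteq> p \<and> dist (nx p r) p < r/2" if "p \<in> Q" "r > 0" for p r
  proof -
    have "\<exists>b. b\<in>Q \<and> b\<noteq>p \<and> dist b p < r/2"
      using lim that islimpt_approachable[of p Q] by (meson half_gt_zero)
    then show ?thesis unfolding nx_def by (rule someI_ex)
  qed
  define stp where "stp b pr = (if b then nx (fst pr) (snd pr) else fst pr,
      min (dist (nx (fst pr) (snd pr)) (fst pr) / 3) (snd pr / 4))" for b and pr :: "'a \<times> real"
  define sq where "sq \<sigma> = rec_nat (p0, 1::real) (\<lambda>n pr. stp (n \<in> \<sigma>) pr)" for \<sigma> :: "nat set"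
  have sq0: "sq \<sigma> 0 = (p0, 1)" for \<sigma> by (simp add: sq_def)
  have sqS: "sq \<sigma> (Suc n) = stp (n \<in> \<sigma>) (sq \<sigma> n)" for \<sigma> n by (simp add: sq_def)
  have inv: "fst (sq \<sigma> n) \<in> Q \<and> snd (sq \<sigma> n) > 0 \<and> snd (sq \<sigma> n) \<le> (1/4)^n" for \<sigma> n
  proof (induction n)
    case 0 then show ?case using p0 by (simp add: sq0)
  next
    case (Suc n)
    then have h: "nx (fst (sq \<sigma> n)) (snd (sq \<sigma> n)) \<in> Q"
       "nx (fst (sq \<sigma> n)) (snd (sq \<sigma> n)) \<noteq> fst (sq \<sigma> n)"
      using nx by blast+
    then show ?case using Suc by (auto simp add: sqS stp_def)
  qed
  have nest1: "dist (fst (sq \<sigma> (Suc n))) (fst (sq \<sigma> n)) + snd (sq \<sigma> (Suc n)) \<le> snd (sq \<sigma> n)" for \<sigma> n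
  proof -
    have "dist (nx (fst (sq \<sigma> n)) (snd (sq \<sigma> n))) (fst (sq \<sigma> n)) < snd (sq \<sigma> n) / 2"
      using nx inv by blast
    then show ?thesis using inv[of \<sigma> n] by (auto simp add: sqS stp_def)
  qed
  have nest: "dist (fst (sq \<sigma> m)) (fst (sq \<sigma> n)) + snd (sq \<sigma> m) \<le> snd (sq \<sigma> n)" if "n \<le> m" for \<sigma> m n
    using that
  proof (induction m rule: dec_induct)
    case base then show ?case by simp
  next
    case (step m)
    have "dist (fst (sq \<sigma> (Suc m))) (fst (sq \<sigma> n)) \<le> dist (fst (sq \<sigma> (Suc m))) (fst (sq \<sigma> m)) + dist (fst (sq \<sigma> m)) (fst (sq \<sigma> n))"
      by (rule dist_triangle)
    then show ?case using step.IH nest1[of \<sigma> m] by linarith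
  qed
  have near: "dist (fst (sq \<sigma> m)) (fst (sq \<sigma> n)) \<le> snd (sq \<sigma> n)" if "n \<le> m" for \<sigma> m n
    using nest[OF that, of \<sigma>] inv[of \<sigma> m] by linarith
  have cauchy: "Cauchy (\<lambda>n. fst (sq \<sigma> n))" for \<sigma>
  proof (rule metric_CauchyI)
    fix e :: real assume "e > 0"
    then obtain M where M: "(1/4::real)^M < e/2" using real_arch_pow_inv[of "e/2" "1/4"] by auto
    show "\<exists>M. \<forall>m\<ge>M. \<forall>n\<ge>M. dist (fst (sq \<sigma> m)) (fst (sq \<sigma> n)) < e"
    proof (intro exI allI impI)
      fix m n assume "M \<le> m" "M \<le> n"
      have "dist (fst (sq \<sigma> m)) (fst (sq \<sigma> n)) \<le> dist (fst (sq \<sigma> m)) (fst (sq \<sigma> M)) + dist (fst (sq \<sigma> n)) (fst (sq \<sigma> M))"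
        by (rule dist_triangle2)
      also have "\<dots> \<le> 2 * snd (sq \<sigma> M)" using near \<open>M \<le> m\<close> \<open>M \<le> n\<close> by (smt (verit))
      also have "\<dots> < e" using inv[of \<sigma> M] M by linarith
      finally show "dist (fst (sq \<sigma> m)) (fst (sq \<sigma> n)) < e" .
    qed
  qed
  define L where "L \<sigma> = lim (\<lambda>n. fst (sq \<sigma> n))" for \<sigma>
  have conv: "(\<lambda>n. fst (sq \<sigma> n)) \<longlonglongrightarrow> L \<sigma>" for \<sigma>
    unfolding L_def by (rule convergent_LIMSEQ_iff[THEN iffD1, OF Cauchy_convergent[OF cauchy]])
  have LQ: "L \<sigma> \<in> Q" for \<sigma>
  proof (rule Lim_in_closed_set[OF clQ _ _ conv])
    show "\<forall>\<^sub>F x in sequentially. fst (sq \<sigma> x) \<in> Q"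
      using inv by (simp add: always_eventually)
  qed simp
  have Lball: "dist (fst (sq \<sigma> n)) (L \<sigma>) \<le> snd (sq \<sigma> n)" for \<sigma> n
  proof -
    have "L \<sigma> \<in> cball (fst (sq \<sigma> n)) (snd (sq \<sigma> n))"
    proof (rule Lim_in_closed_set[OF closed_cball _ _ conv])
      have "\<forall>m\<ge>n. fst (sq \<sigma> m) \<in> cball (fst (sq \<sigma> n)) (snd (sq \<sigma> n))"
      proof (intro allI impI)
        fix m assume "n \<le> m"
        then show "fst (sq \<sigma> m) \<in> cball (fst (sq \<sigma> n)) (snd (sq \<sigma> n))"
          using near[of n m \<sigma>] by (simp add: dist_commute)
      qed
      then show "\<forall>\<^sub>F x in sequentially. fst (sq \<sigma> x) \<in> cball (fst (sq \<sigma> n)) (snd (sq \<sigma> n))"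
        unfolding eventually_sequentially by blast
    qed simp
    then show ?thesis by simp
  qed
  have agree: "\<forall>k<n. (k \<in> \<sigma>) = (k \<in> \<tau>) \<Longrightarrow> sq \<sigma> n = sq \<tau> n" for \<sigma> \<tau> n
    by (induction n) (auto simp: sq0 sqS)
  have "inj L"
  proof
    fix \<sigma> \<tau> assume eq: "L \<sigma> = L \<tau>"
    show "\<sigma> = \<tau>"
    proof (rule ccontr)
      assume "\<sigma> \<noteq> \<tau>"
      then have ex: "\<exists>n. (n \<in> \<sigma>) \<noteq> (n \<in> \<tau>)" by blast
      define n where "n = (LEAST n. (n \<in> \<sigma>) \<noteq> (n \<in> \<tau>))"
      have dn: "(n \<in> \<sigma>) \<noteq> (n \<in> \<tau>)" unfolding n_def by (rule LeastI_ex[OF ex])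
      have "\<forall>k<n. (k \<in> \<sigma>) = (k \<in> \<tau>)" unfolding n_def using not_less_Least by blast
      then have same: "sq \<sigma> n = sq \<tau> n" by (rule agree)
      define p where "p = fst (sq \<sigma> n)"
      define r where "r = snd (sq \<sigma> n)"
      define q where "q = nx p r"
      have pq: "q \<noteq> p" using nx inv unfolding q_def p_def r_def by blast
      have r1: "snd (sq \<sigma> (Suc n)) \<le> dist q p / 3" "snd (sq \<tau> (Suc n)) \<le> dist q p / 3"
        using same by (auto simp: sqS stp_def q_def p_def r_def)
      have cc: "dist (fst (sq \<sigma> (Suc n))) (fst (sq \<tau> (Suc n))) = dist q p"
        using same dn by (auto simp: sqS stp_def q_def p_def r_def dist_commute)
      have "dist (fst (sq \<sigma> (Suc n))) (fst (sq \<tau> (Suc n))) \<le> dist (fst (sq \<sigma> (Suc n))) (L \<sigma>) + dist (fst (sq \<tau> (Suc n))) (L \<tau>)"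
        using eq dist_triangle2 by metis
      then have "dist q p \<le> 2 * (dist q p / 3)" using Lball[of \<sigma> "Suc n"] Lball[of \<tau> "Suc n"] r1 cc by linarith
      then show False using pq by simp
    qed
  qed
  then show ?thesis using LQ by (intro card_of_ordLeqI[of L]) auto
qed

lemma perfect_card:
  fixes Q :: "'a::complete_space set"
  assumes "closed Q" "Q \<noteq> {}" "\<forall>x\<in>Q. x islimpt Q"
  shows "|UNIV::real set| \<le>o |Q|"
proof -
  have "|UNIV::nat set set| =o |UNIV::real set|"
    using nat_sets_eqpoll_reals eqpoll_iff_card_of_ordIso by blast
  then show ?thesis using perfect_card_nat[OF assms] ordIso_symmetric ordIso_ordLeq_trans by blast
qed

lemma closed_sets_card: "|{Q::real set. closed Q}| \<le>o |UNIV::nat set set|"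
proof (rule card_of_ordLeqI)
  define code where "code Q = {n::nat. {of_rat (fst (from_nat n::rat\<times>rat))<..<of_rat (snd (from_nat n::rat\<times>rat))} \<inter> Q = {}}" for Q :: "real set"
  have sub: "Q1 \<subseteq> Q2" if c1: "closed Q1" and c2: "closed Q2" and c3: "code Q1 = code Q2" for Q1 Q2
  proof
    fix x assume x1: "x \<in> Q1"
    show "x \<in> Q2"
    proof (rule ccontr)
      assume "x \<notin> Q2"
      then obtain e where e: "e > 0" "ball x e \<subseteq> - Q2"
        using c2 open_contains_ball[of "- Q2"] by (metis ComplI closed_open)
      obtain p where p: "p \<in> \<rat>" "x - e < p" "p < x" using Rats_dense_in_real[of "x - e" x] e by auto
      obtain q where q: "q \<in> \<rat>" "x < q" "q < x + e" using Rats_dense_in_real[of x "x + e"] e by auto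
      obtain p' where p': "p = of_rat p'" using p(1) Rats_cases by blast
      obtain q' where q': "q = of_rat q'" using q(1) Rats_cases by blast
      define n where "n = to_nat (p', q')"
      have fn: "(from_nat n :: rat \<times> rat) = (p', q')" by (simp add: n_def)
      have "{p<..<q} \<subseteq> ball x e" using p q by (auto simp: dist_real_def)
      have cd: "m \<in> code Q \<longleftrightarrow> {p<..<q} \<inter> Q = {}" if "m = n" for m Q
        using that by (simp add: code_def fn p' q')
      have "n \<in> code Q2" using cd e \<open>{p<..<q} \<subseteq> ball x e\<close> by blast
      moreover have "n \<notin> code Q1" using cd x1 p q by auto
      ultimately show False using c3 by simp
    qed
  qed
  show "inj_on code {Q. closed Q}"
    by (rule inj_onI) (use sub in \<open>auto intro: equalityI\<close>)
  show "\<And>a. a \<in> {Q. closed Q} \<Longrightarrow> code a \<in> UNIV" by simp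
qed

lemma nat_sets_real: "|UNIV::nat set set| =o |UNIV::real set|"
  using nat_sets_eqpoll_reals eqpoll_iff_card_of_ordIso by blast

lemma vec2_card: "|UNIV::(real^2) set| \<le>o |UNIV::real set|"
proof -
  have "|UNIV::(real^2) set| \<le>o |UNIV::(real\<times>real) set|"
  proof (rule card_of_ordLeqI[of "\<lambda>v. (v$1, v$2)"])
    show "inj_on (\<lambda>v::real^2. (v$1, v$2)) UNIV"
      by (auto simp: inj_on_def vec_eq_iff forall_2)
  qed auto
  moreover have "|UNIV::(real\<times>real) set| =o |UNIV::real set|"
    using card_of_Times_same_infinite[OF infinite_UNIV_char_0] by simp
  ultimately show ?thesis using ordLeq_ordIso_trans by blast
qed

lemma index_card:
  assumes "I \<subseteq> UNIV \<times> {Q::real set. closed Q}"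
  shows "|I :: ((real^2) \<times> real set) set| \<le>o |UNIV::real set|"
proof -
  have "|I| \<le>o |(UNIV::(real^2) set) \<times> {Q::real set. closed Q}|" using assms card_of_mono1 by blast
  also have "|(UNIV::(real^2) set) \<times> {Q::real set. closed Q}| \<le>o |(UNIV::real set) \<times> {Q::real set. closed Q}|"
    by (rule card_of_Times_mono1[OF vec2_card])
  also have "|(UNIV::real set) \<times> {Q::real set. closed Q}| \<le>o |(UNIV::real set) \<times> (UNIV::real set)|"
    by (rule card_of_Times_mono2[OF ordLeq_ordIso_trans[OF closed_sets_card nat_sets_real]])
  also have "|(UNIV::real set) \<times> (UNIV::real set)| =o |UNIV::real set|"
    using card_of_Times_same_infinite[OF infinite_UNIV_char_0] by simp
  finally show ?thesis using ordLeq_ordIso_trans by blast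
qed

lemma fin_le_inf: "finite A \<Longrightarrow> \<not> finite B \<Longrightarrow> |A| \<le>o |B|"
  by (rule ordLess_imp_ordLeq[OF finite_ordLess_infinite[OF card_of_Well_order card_of_Well_order]])
     (auto simp: Field_card_of)

lemma avoid_lemma:
  assumes K: "|K| <o |I|" and IY: "|I| \<le>o |Y|" and infY: "\<not> finite Y"
    and fin: "\<forall>\<beta>\<in>K. finite (Fb \<beta>)" and finE: "finite E"
  shows "\<exists>y\<in>Y. y \<notin> E \<and> (\<forall>\<beta>\<in>K. y \<notin> Fb \<beta>)"
proof (rule ccontr)
  assume "\<not> ?thesis"
  then have sub: "Y \<subseteq> E \<union> (\<Union>\<beta>\<in>K. Fb \<beta>)" by blast
  show False
  proof (cases "finite K")
    case True
    then have "finite (E \<union> (\<Union>\<beta>\<in>K. Fb \<beta>))" using fin finE by auto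
    then show False using sub infY finite_subset by blast
  next
    case False
    then have "K \<noteq> {}" by auto
    then have eq: "E \<union> (\<Union>\<beta>\<in>K. Fb \<beta>) = (\<Union>\<beta>\<in>K. Fb \<beta> \<union> E)" by blast
    have "|\<Union>\<beta>\<in>K. Fb \<beta> \<union> E| \<le>o |K|"
      by (rule card_of_UNION_ordLeq_infinite[OF False card_of_mono1[OF subset_refl]])
         (use fin finE False in \<open>auto intro!: fin_le_inf\<close>)
    then have "|Y| \<le>o |K|" using sub eq card_of_mono1 ordLeq_transitive by metis
    then have "|Y| <o |Y|" using K IY ordLeq_ordLess_trans ordLess_ordLeq_trans by metis
    then show False using ordLess_irreflexive by blast
  qed
qed

lemma transfinite_choice:
  fixes I :: "'i set" and H :: "'i \<Rightarrow> 'x \<Rightarrow> 'r" and C :: "'c set"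
  assumes IC: "|I| \<le>o |C|" and infC: "\<not> finite C"
    and Av: "\<forall>\<alpha>\<in>I. Av \<alpha> \<subseteq> X \<and> |C| \<le>o |Av \<alpha>|"
    and Qc: "\<forall>\<alpha>\<in>I. |C| \<le>o |Qs \<alpha>|"
    and fib: "\<forall>\<alpha>\<in>I. \<forall>t. finite {x\<in>X. H \<alpha> x = t}"
  shows "\<exists>xf tf. \<forall>\<alpha>\<in>I. xf \<alpha> \<in> Av \<alpha> \<and> tf \<alpha> \<in> Qs \<alpha> \<and> (\<forall>\<gamma>\<in>I. H \<alpha> (xf \<gamma>) \<noteq> tf \<alpha>)"
proof -
  define r where "r = |I|"
  have wo: "wo_rel r" unfolding r_def wo_rel_def by (rule card_of_Well_order)
  have Fr: "Field r = I" unfolding r_def by (rule Field_card_of)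
  define R where "R = r - Id"
  have wfR: "wf R" unfolding R_def using wo wo_rel.WF by blast
  define good where "good g \<alpha> xt \<longleftrightarrow> fst xt \<in> Av \<alpha> \<and> (\<forall>\<beta>\<in>underS r \<alpha>. H \<beta> (fst xt) \<noteq> snd (g \<beta>))
     \<and> snd xt \<in> Qs \<alpha> \<and> H \<alpha> (fst xt) \<noteq> snd xt \<and> (\<forall>\<beta>\<in>underS r \<alpha>. H \<alpha> (fst (g \<beta>)) \<noteq> snd xt)"
    for g :: "'i \<Rightarrow> 'x \<times> 'r" and \<alpha> xt
  define F where "F g \<alpha> = (SOME xt. good g \<alpha> xt)" for g \<alpha>
  define f where "f = wfrec R F"
  have fe: "f \<alpha> = F f \<alpha>" for \<alpha>
  proof -
    have "f \<alpha> = F (cut f R \<alpha>) \<alpha>" unfolding f_def by (rule wfrec[OF wfR])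
    moreover have "good (cut f R \<alpha>) \<alpha> = good f \<alpha>"
      by (rule ext) (simp add: good_def cut_apply R_def underS_def)
    ultimately show ?thesis unfolding F_def by simp
  qed
  have ex: "\<exists>xt. good f \<alpha> xt" if "\<alpha> \<in> I" for \<alpha>
  proof -
    have K: "|underS r \<alpha>| <o |I|"
      using card_of_underS[OF card_of_Card_order, of \<alpha> I] that unfolding r_def by (simp add: Field_card_of)
    have uI: "underS r \<alpha> \<subseteq> I" using Fr by (auto simp: underS_def Field_def)
    have IA: "|I| \<le>o |Av \<alpha>|" using IC Av that ordLeq_transitive by blast
    have infA: "\<not> finite (Av \<alpha>)" using Av that infC card_of_ordLeq_infinite by blast
    obtain x where x: "x \<in> Av \<alpha>" "\<forall>\<beta>\<in>underS r \<alpha>. x \<notin> {x\<in>X. H \<beta> x = snd (f \<beta>)}"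
      using avoid_lemma[OF K IA infA, of "\<lambda>\<beta>. {x\<in>X. H \<beta> x = snd (f \<beta>)}" "{}"] fib
      using uI by (auto simp: subset_iff)
    have IQ: "|I| \<le>o |Qs \<alpha>|" using IC Qc that ordLeq_transitive by blast
    have infQ: "\<not> finite (Qs \<alpha>)" using Qc that infC card_of_ordLeq_infinite by blast
    obtain t where t: "t \<in> Qs \<alpha>" "t \<notin> {H \<alpha> x}" "\<forall>\<beta>\<in>underS r \<alpha>. t \<notin> {H \<alpha> (fst (f \<beta>))}"
      using avoid_lemma[OF K IQ infQ, of "\<lambda>\<beta>. {H \<alpha> (fst (f \<beta>))}" "{H \<alpha> x}"] by auto
    have "x \<in> X" using x Av that by blast
    then have "good f \<alpha> (x, t)" unfolding good_def using x t by auto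
    then show ?thesis by blast
  qed
  have gd: "good f \<alpha> (f \<alpha>)" if "\<alpha> \<in> I" for \<alpha>
    using someI_ex[OF ex[OF that]] fe unfolding F_def by simp
  show ?thesis
  proof (intro exI ballI conjI)
    fix \<alpha> assume a: "\<alpha> \<in> I"
    show "fst (f \<alpha>) \<in> Av \<alpha>" "snd (f \<alpha>) \<in> Qs \<alpha>" using gd[OF a] unfolding good_def by auto
    fix \<gamma> assume g: "\<gamma> \<in> I"
    show "H \<alpha> (fst (f \<gamma>)) \<noteq> snd (f \<alpha>)"
    proof (cases "\<gamma> = \<alpha>")
      case True then show ?thesis using gd[OF a] unfolding good_def by auto
    next
      case False
      have "(\<gamma>, \<alpha>) \<in> r \<or> (\<alpha>, \<gamma>) \<in> r" using wo_rel.TOTALS[OF wo] a g Fr by blast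
      then have "\<gamma> \<in> underS r \<alpha> \<or> \<alpha> \<in> underS r \<gamma>" using False by (auto simp: underS_def)
      then show ?thesis using gd[OF a] gd[OF g] unfolding good_def by blast
    qed
  qed
qed

lemma circle_fiber:
  fixes d :: "real^2"
  assumes "d \<noteq> 0"
  shows "finite {x \<in> sphere (0::real^2) 1. x \<bullet> d / (d \<bullet> d) = t}"
proof -
  define N where "N = d \<bullet> d"
  have N: "N > 0" using assms by (simp add: N_def)
  define s where "s = t * N"
  define v :: "real^2" where "v = (\<chi> i. if i = 1 then - d$2 else d$1)"
  have v1: "v$1 = - d$2" and v2: "v$2 = d$1" by (simp_all add: v_def)
  have Nc: "N = d$1 * d$1 + d$2 * d$2" by (simp add: N_def inner_vec_def sum_2)
  define w where "w = sqrt (N - s^2)"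
  have "{x \<in> sphere (0::real^2) 1. x \<bullet> d / (d \<bullet> d) = t} \<subseteq> (\<lambda>c. (s/N) *\<^sub>R d + (c/N) *\<^sub>R v) ` {w, -w}"
  proof
    fix x :: "real^2" assume x: "x \<in> {x \<in> sphere (0::real^2) 1. x \<bullet> d / (d \<bullet> d) = t}"
    have n1: "x$1 * x$1 + x$2 * x$2 = 1"
    proof -
      have "norm x = 1" using x by simp
      then have "x \<bullet> x = 1" using norm_eq_1 by blast
      then show ?thesis by (simp add: inner_vec_def sum_2)
    qed
    have xd: "x$1 * d$1 + x$2 * d$2 = s"
    proof -
      have "x \<bullet> d = s" using x N by (simp add: s_def N_def field_simps)
      then show ?thesis by (simp add: inner_vec_def sum_2)
    qed
    define c where "c = - x$1 * d$2 + x$2 * d$1"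
    have sq: "c^2 = N - s^2"
    proof -
      have "c^2 + s^2 = N * (x$1 * x$1 + x$2 * x$2)"
        unfolding c_def xd[symmetric] Nc by (simp add: power2_eq_square algebra_simps)
      then show ?thesis using n1 by simp
    qed
    then have "w = \<bar>c\<bar>" unfolding w_def by (metis real_sqrt_abs)
    then have "c = w \<or> c = -w" by linarith
    moreover have "x = (s/N) *\<^sub>R d + (c/N) *\<^sub>R v"
    proof -
      have "x$1 * N = s * d$1 + c * (- d$2)" "x$2 * N = s * d$2 + c * d$1"
        unfolding Nc c_def xd[symmetric] by (simp_all add: algebra_simps)
      then show ?thesis using N
        by (simp add: vec_eq_iff forall_2 v1 v2 field_simps)
    qed
    ultimately show "x \<in> (\<lambda>c. (s/N) *\<^sub>R d + (c/N) *\<^sub>R v) ` {w, -w}" by blast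
  qed
  then show ?thesis by (rule finite_subset) simp
qed

theorem mainTheorem5:
  shows "\<exists>A :: (real^2) set. A \<subseteq> sphere 0 1 \<and>
    (\<forall>a d. d \<noteq> 0 \<longrightarrow>
       bernstein_in (orth_proj_line a d ` A) (orth_proj_line a d ` sphere 0 1))"
proof -
  define S where "S = sphere (0::real^2) 1"
  define h where "h d x = (x \<bullet> d) / (d \<bullet> d)" for d x :: "real^2"
  define I where "I = {(d, Q). d \<noteq> 0 \<and> Q \<noteq> {} \<and> closed Q \<and> (\<forall>t\<in>Q. t islimpt Q) \<and> Q \<subseteq> h d ` S}"
  have IC: "|I| \<le>o |UNIV::real set|"
    by (rule index_card) (auto simp: I_def)
  have "\<exists>xf tf. \<forall>\<alpha>\<in>I. xf \<alpha> \<in> {x\<in>S. h (fst \<alpha>) x \<in> snd \<alpha>} \<and> tf \<alpha> \<in> snd \<alpha> \<and>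
      (\<forall>\<gamma>\<in>I. h (fst \<alpha>) (xf \<gamma>) \<noteq> tf \<alpha>)"
  proof (rule transfinite_choice[OF IC infinite_UNIV_char_0])
    show "\<forall>\<alpha>\<in>I. {x\<in>S. h (fst \<alpha>) x \<in> snd \<alpha>} \<subseteq> S \<and> |UNIV::real set| \<le>o |{x\<in>S. h (fst \<alpha>) x \<in> snd \<alpha>}|"
    proof
      fix \<alpha> assume a: "\<alpha> \<in> I"
      then obtain d Q where dQ: "\<alpha> = (d, Q)" "d \<noteq> 0" "Q \<noteq> {}" "closed Q" "\<forall>t\<in>Q. t islimpt Q" "Q \<subseteq> h d ` S"
        unfolding I_def by blast
      have c1: "|UNIV::real set| \<le>o |Q|" using perfect_card dQ by blast
      have c2: "|Q| \<le>o |{x\<in>S. h d x \<in> Q}|"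
        by (rule surj_imp_ordLeq) (use dQ in auto)
      have "|UNIV::real set| \<le>o |{x\<in>S. h d x \<in> Q}|" by (rule ordLeq_transitive[OF c1 c2])
      then show "{x\<in>S. h (fst \<alpha>) x \<in> snd \<alpha>} \<subseteq> S \<and> |UNIV::real set| \<le>o |{x\<in>S. h (fst \<alpha>) x \<in> snd \<alpha>}|"
        using dQ(1) by auto
    qed
    show "\<forall>\<alpha>\<in>I. |UNIV::real set| \<le>o |snd \<alpha>|"
      using perfect_card by (auto simp: I_def)
    show "\<forall>\<alpha>\<in>I. \<forall>t. finite {x\<in>S. h (fst \<alpha>) x = t}"
      using circle_fiber unfolding I_def S_def h_def by auto
  qed
  then obtain xf tf where xt: "\<forall>\<alpha>\<in>I. xf \<alpha> \<in> {x\<in>S. h (fst \<alpha>) x \<in> snd \<alpha>} \<and> tf \<alpha> \<in> snd \<alpha> \<and>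
      (\<forall>\<gamma>\<in>I. h (fst \<alpha>) (xf \<gamma>) \<noteq> tf \<alpha>)" by blast
  define A where "A = xf ` I"
  have AS: "A \<subseteq> S" using xt unfolding A_def by auto
  have bern: "bernstein_in (orth_proj_line a d ` A) (orth_proj_line a d ` S)" if d0: "d \<noteq> 0" for a d
  proof -
    define c0 where "c0 = a - ((a \<bullet> d) / (d \<bullet> d)) *\<^sub>R d"
    define g where "g t = c0 + t *\<^sub>R d" for t :: real
    have pi: "orth_proj_line a d x = g (h d x)" for x
      unfolding orth_proj_line_def g_def c0_def h_def
      by (simp add: inner_diff_left diff_divide_distrib scaleR_diff_left algebra_simps)
    have ginj: "g s = g t \<longleftrightarrow> s = t" for s t
      using d0 by (simp add: g_def)
    have piS: "orth_proj_line a d ` S = g ` h d ` S" using pi by (auto simp: image_iff)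
    have contg: "continuous_on UNIV g" unfolding g_def by (intro continuous_intros)
    have conth: "continuous_on UNIV (h d)" unfolding h_def using d0 by (intro continuous_intros) auto
    have compY: "compact (orth_proj_line a d ` S)"
    proof -
      have "compact (h d ` S)" unfolding S_def
        by (rule compact_continuous_image[OF continuous_on_subset[OF conth]]) auto
      moreover have "continuous_on (h d ` S) g" using contg continuous_on_subset by blast
      ultimately show ?thesis unfolding piS using compact_continuous_image by blast
    qed
    show ?thesis unfolding bernstein_in_def
    proof (intro conjI allI impI)
      show "orth_proj_line a d ` A \<subseteq> orth_proj_line a d ` S" using AS by auto
      fix P assume "perfect_in (orth_proj_line a d ` S) P \<and> P \<noteq> {}"
      then have cl: "closedin (top_of_set (orth_proj_line a d ` S)) P" and lp: "\<forall>x\<in>P. x islimpt P"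
        and Pne: "P \<noteq> {}" unfolding perfect_in_def by auto
      have PY: "P \<subseteq> orth_proj_line a d ` S" using closedin_imp_subset[OF cl] .
      have clP: "closed P" using closedin_closed_trans[OF cl compact_imp_closed[OF compY]] .
      define Q where "Q = g -` P"
      have clQ: "closed Q" unfolding Q_def
        by (rule continuous_closed_vimage[OF clP]) (use contg in \<open>auto simp: continuous_on_eq_continuous_at\<close>)
      have PgQ: "P \<subseteq> g ` Q" using PY piS unfolding Q_def by auto
      have QS: "Q \<subseteq> h d ` S"
      proof
        fix t assume "t \<in> Q"
        then have "g t \<in> g ` h d ` S" using PY piS unfolding Q_def by auto
        then show "t \<in> h d ` S" using ginj by auto
      qed
      have Qne: "Q \<noteq> {}" using Pne PgQ by auto
      have Qlp: "\<forall>t\<in>Q. t islimpt Q"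
      proof
        fix t assume tQ: "t \<in> Q"
        have gl: "g t islimpt P" using lp tQ unfolding Q_def by auto
        show "t islimpt Q"
          unfolding islimpt_approachable
        proof (intro allI impI)
          fix e :: real assume e: "e > 0"
          have "e * norm d > 0" using e d0 by simp
          then obtain y where y: "y \<in> P" "y \<noteq> g t" "dist y (g t) < e * norm d"
            using gl unfolding islimpt_approachable by blast
          then obtain s where s: "s \<in> Q" "y = g s" using PgQ by auto
          have "dist y (g t) = \<bar>s - t\<bar> * norm d"
            unfolding s g_def dist_norm by (simp add: scaleR_diff_left[symmetric])
          then have "\<bar>s - t\<bar> < e" using y(3) d0 by simp
          then show "\<exists>x'\<in>Q. x' \<noteq> t \<and> dist x' t < e"
            using s y(2) by (intro bexI[of _ s]) (auto simp: dist_real_def)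
        qed
      qed
      have aI: "(d, Q) \<in> I" unfolding I_def using d0 Qne clQ Qlp QS by auto
      have x: "xf (d, Q) \<in> A" "h d (xf (d, Q)) \<in> Q" using xt aI unfolding A_def by auto
      then have "orth_proj_line a d (xf (d, Q)) \<in> P" using pi unfolding Q_def by simp
      then show "orth_proj_line a d ` A \<inter> P \<noteq> {}" using x by blast
      have t: "tf (d, Q) \<in> Q" "\<forall>\<gamma>\<in>I. h d (xf \<gamma>) \<noteq> tf (d, Q)" using xt aI by auto
      have gP: "g (tf (d, Q)) \<in> P" using t unfolding Q_def by simp
      have "g (tf (d, Q)) \<notin> orth_proj_line a d ` A"
      proof
        assume "g (tf (d, Q)) \<in> orth_proj_line a d ` A"
        then obtain \<gamma> where "\<gamma> \<in> I" "g (tf (d, Q)) = g (h d (xf \<gamma>))" unfolding A_def using pi by auto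
        then show False using t ginj by metis
      qed
      then show "(orth_proj_line a d ` S - orth_proj_line a d ` A) \<inter> P \<noteq> {}" using gP PY by blast
    qed
  qed
  show ?thesis using AS bern unfolding S_def by blast
qed

end
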